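(* Let $f$ be a $2\pi$-periodic continuous function with $f\in\mathrm{Lip}(\alpha)$, $0<\alpha\le1$, i.e. its modulus of continuity satisfies $\omega(\delta)=\mathcal{O}(\delta^{\alpha})$. Let $\{p_k\}_{k\ge0}$ be non-negative numbers with $P_n:=\sum_{k=0}^n p_k\ne0$ for all $n$, let $a_{n,k}=p_k/P_n$ for $0\le k\le n$ and $a_{n,k}=0$ otherwise, and suppose that for some $\beta\ge0$ \[ \sum_{k=0}^{m-1}(k+1)^{\beta}\left|\frac{a_{n,k}}{(k+1)^{\beta}}-\frac{a_{n,k+1}}{(k+2)^{\beta}}\right|=\mathcal{O}(a_{n,m}) \] for all $0\le m\le n$, $n=0,1,\dots$. Let $R_n(f;x):=\frac{1}{P_n}\sum_{k=0}^n p_kS_k(f;x)$. Then \[ \|R_n(f)-f\|=\begin{cases}\mathcal{O}\left(\left(\frac{p_n}{P_n}\right)^{\alpha}\right), & 0<\alpha<1,\\[4pt] \mathcal{O}\left(\frac{p_n}{P_n}\log\left(\frac{\pi P_n}{p_n}\right)\right), & \alpha=1.\end{cases} \]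
   Context: $S_k(f;x)$ is the $k$-th partial sum of the Fourier series of $f$ at $x$. $\|\cdot\|$ is the sup-norm. $\omega(\delta)=\sup_{|h|\le\delta}\sup_x|f(x+h)-f(x)|$. The notation $u=\mathcal{O}(v)$ means $u\le Cv$ for a positive constant $C$ (independent of $n$). *)

theory Defs
  imports "HOL-Analysis.Analysis"
begin

definition fourier_a :: "(real \<Rightarrow> real) \<Rightarrow> nat \<Rightarrow> real" where
  "fourier_a f j = (1 / pi) * integral {-pi..pi} (\<lambda>t. f t * cos (real j * t))"

definition fourier_b :: "(real \<Rightarrow> real) \<Rightarrow> nat \<Rightarrow> real" where
  "fourier_b f j = (1 / pi) * integral {-pi..pi} (\<lambda>t. f t * sin (real j * t))"

definition fourier_partial_sum :: "(real \<Rightarrow> real) \<Rightarrow> nat \<Rightarrow> real \<Rightarrow> real" where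
  "fourier_partial_sum f k x =
     fourier_a f 0 / 2 + (\<Sum>j=1..k. fourier_a f j * cos (real j * x) + fourier_b f j * sin (real j * x))"

definition modulus_of_continuity :: "(real \<Rightarrow> real) \<Rightarrow> real \<Rightarrow> real" where
  "modulus_of_continuity f \<delta> = (SUP h\<in>{h. \<bar>h\<bar> \<le> \<delta>}. SUP x. \<bar>f (x + h) - f x\<bar>)"

definition sup_norm :: "(real \<Rightarrow> real) \<Rightarrow> real" where
  "sup_norm g = (SUP x. \<bar>g x\<bar>)"

definition Psum :: "(nat \<Rightarrow> real) \<Rightarrow> nat \<Rightarrow> real" where
  "Psum p n = (\<Sum>k\<le>n. p k)"

definition amat :: "(nat \<Rightarrow> real) \<Rightarrow> nat \<Rightarrow> nat \<Rightarrow> real" where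
  "amat p n k = (if k \<le> n then p k / Psum p n else 0)"

definition R_mean :: "(nat \<Rightarrow> real) \<Rightarrow> (real \<Rightarrow> real) \<Rightarrow> nat \<Rightarrow> real \<Rightarrow> real" where
  "R_mean p f n x = (1 / Psum p n) * (\<Sum>k\<le>n. p k * fourier_partial_sum f k x)"

end

theory Submission
  imports Defs
begin


lemma periodic_integral_shift:
  fixes g :: "real \<Rightarrow> real"
  assumes cg: "continuous_on UNIV g" and pg: "\<And>t. g (t + 2*pi) = g t"
  shows "integral {c..c+2*pi} g = integral {-pi..pi} g"
proof -
  define A where "A = -\<bar>c\<bar> - 10"
  define B where "B = \<bar>c\<bar> + 10"
  define G where "G = (\<lambda>y. integral {A..y} g)"
  have pi4: "pi < 4" using pi_less_4 .
  have intg: "g integrable_on {a..b}" for a b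
    by (rule integrable_continuous_real) (use cg continuous_on_subset in blast)
  have dG: "DERIV G y :> g y" if "y \<in> {A<..<B}" for y
  proof -
    have "(G has_vector_derivative g y) (at y within {A..B})"
      unfolding G_def
      by (rule integral_has_vector_derivative) (use cg continuous_on_subset that in auto)
    then have "(G has_vector_derivative g y) (at y within {A<..<B})"
      by (rule has_vector_derivative_within_subset) auto
    moreover have "at y within {A<..<B} = at y"
      by (rule at_within_open) (use that in auto)
    ultimately have "(G has_vector_derivative g y) (at y)"
      by simp
    then show ?thesis by (simp add: has_real_derivative_iff_has_vector_derivative)
  qed
  define F where "F = (\<lambda>y. G (y + 2*pi) - G y)"
  have dF: "DERIV F y :> 0" if "y \<in> {A<..<B - 2*pi}" for y
  proof -
    have yA: "A < y" "y < B - 2*pi" using that by auto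
    have pp: "0 < pi" by simp
    have d2: "DERIV G (y+2*pi) :> g (y+2*pi)" by (rule dG) (unfold greaterThanLessThan_iff, intro conjI; use yA pp in linarith)
    have "DERIV (\<lambda>y. G (y + 2*pi)) y :> g (y + 2*pi) * 1"
      by (rule DERIV_chain2[of G _ "\<lambda>y. y + 2*pi", OF d2]) (auto intro!: derivative_eq_intros)
    moreover have "DERIV G y :> g y" by (rule dG) (unfold greaterThanLessThan_iff, intro conjI; use yA pp in linarith)
    ultimately have "DERIV F y :> g (y + 2*pi) * 1 - g y"
      unfolding F_def by (rule DERIV_diff)
    then show ?thesis using pg by simp
  qed
  have eq: "integral {y..y+2*pi} g = F y" if "A \<le> y" for y
  proof -
    have "integral {A..y} g + integral {y..y+2*pi} g = integral {A..y+2*pi} g"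
      by (rule Henstock_Kurzweil_Integration.integral_combine) (use that pi_gt_zero intg in auto)
    then show ?thesis unfolding F_def G_def by simp
  qed
  have "F c = F (-pi)"
    by (rule DERIV_isconst3[of A "B - 2*pi"]) (use dF pi4 pi_gt_zero in \<open>auto simp: A_def B_def\<close>)
  moreover have "A \<le> c" "A \<le> -pi" using pi4 by (auto simp: A_def)
  ultimately show ?thesis using eq[of c] eq[of "-pi"] by simp
qed



definition dk :: "nat \<Rightarrow> real \<Rightarrow> real" where
  "dk k t = 1/2 + (\<Sum>j=1..k. cos (real j * t))"

lemma dk_Suc: "dk (Suc k) t = dk k t + cos (real (Suc k) * t)"
  unfolding dk_def by simp

lemma dk_closed: "2 * sin (t/2) * dk k t = sin ((real k + 1/2) * t)"
proof (induction k)
  case 0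
  then show ?case by (simp add: dk_def)
next
  case (Suc k)
  have e1: "(real (Suc k) + 1/2) * t = real (Suc k) * t + t/2" by (simp add: algebra_simps)
  have e2: "(real k + 1/2) * t = real (Suc k) * t - t/2" by (simp add: algebra_simps)
  have "2 * sin (t/2) * dk (Suc k) t = 2 * sin (t/2) * dk k t + 2 * sin (t/2) * cos (real (Suc k) * t)"
    by (simp add: dk_Suc algebra_simps)
  also have "\<dots> = sin ((real (Suc k) + 1/2) * t)"
    unfolding Suc.IH e2 e1 sin_add sin_diff by (simp add: algebra_simps)
  finally show ?case .
qed

lemma sinsum_closed: "2 * sin (t/2) * (\<Sum>j\<le>k. sin ((real j + 1/2) * t)) = 1 - cos ((real k + 1) * t)"
proof (induction k)
  case 0
  have "t = t/2 + t/2" by simp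
  then have "cos t = cos (t/2) * cos (t/2) - sin (t/2) * sin (t/2)" by (metis cos_add)
  moreover have "cos (t/2) * cos (t/2) = 1 - sin (t/2) * sin (t/2)"
    using sin_cos_squared_add[of "t/2"] by (simp add: power2_eq_square algebra_simps)
  ultimately show ?case by (simp add: algebra_simps)
next
  case (Suc k)
  have e1: "(real (Suc k) + 1) * t = (real (Suc k) + 1/2) * t + t/2" by (simp add: algebra_simps)
  have e2: "(real k + 1) * t = (real (Suc k) + 1/2) * t - t/2" by (simp add: algebra_simps)
  have "2 * sin (t/2) * (\<Sum>j\<le>Suc k. sin ((real j + 1/2) * t))
      = 2 * sin (t/2) * (\<Sum>j\<le>k. sin ((real j + 1/2) * t)) + 2 * sin (t/2) * sin ((real (Suc k) + 1/2) * t)"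
    by (simp add: algebra_simps)
  also have "\<dots> = 1 - cos ((real (Suc k) + 1) * t)"
    unfolding Suc.IH e2 e1 cos_add cos_diff by (simp add: algebra_simps)
  finally show ?case .
qed

lemma abel_sum:
  fixes a s :: "nat \<Rightarrow> real"
  shows "(\<Sum>k\<le>n. a k * s k) = (\<Sum>k<n. (a k - a (Suc k)) * (\<Sum>j\<le>k. s j)) + a n * (\<Sum>j\<le>n. s j)"
proof (induction n)
  case 0
  then show ?case by simp
next
  case (Suc n)
  then show ?case by (simp add: algebra_simps)
qed

lemma sin_half_lower:
  fixes s :: real
  assumes "0 \<le> s" "s \<le> 2"
  shows "s / 3 \<le> sin s"
proof -
  have "\<bar>sin s - (\<Sum>m<3. sin_coeff m * s ^ m)\<bar> \<le> inverse (fact 3) * \<bar>s\<bar> ^ 3"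
    by (rule Maclaurin_sin_bound)
  moreover have "(\<Sum>m<3. sin_coeff m * s ^ m) = s"
    by (simp add: eval_nat_numeral sin_coeff_def)
  moreover have "inverse (fact 3) * \<bar>s\<bar> ^ 3 = s^3 / 6"
    using assms by (simp add: eval_nat_numeral field_simps)
  ultimately have "s - s^3/6 \<le> sin s" by linarith
  moreover have "s^3 / 6 \<le> 2 * s / 3"
  proof -
    have "s * s \<le> 4" using assms mult_mono[of s 2 s 2] by auto
    then have "s * (s * s) \<le> s * 4" using assms by (intro mult_left_mono) auto
    then show ?thesis by (simp add: power3_eq_cube)
  qed
  ultimately show ?thesis by linarith
qed

lemma sin_half_t:
  assumes "0 < t" "t \<le> pi"
  shows "t / 6 \<le> sin (t/2)" "0 < sin (t/2)"
proof -
  have "t/2 \<le> 2" using assms pi_less_4 by linarith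
  then show "t / 6 \<le> sin (t/2)" using sin_half_lower[of "t/2"] assms by simp
  then show "0 < sin (t/2)" using assms by linarith
qed

definition kern :: "(nat \<Rightarrow> real) \<Rightarrow> nat \<Rightarrow> real \<Rightarrow> real" where
  "kern a n t = (\<Sum>k\<le>n. a k * dk k t)"

lemma dk_bound:
  assumes "0 < t" "t \<le> pi"
  shows "\<bar>dk k t\<bar> \<le> 3 / t"
proof -
  note s = sin_half_t[OF assms]
  have "\<bar>2 * sin (t/2) * dk k t\<bar> = \<bar>sin ((real k + 1/2) * t)\<bar>"
    using dk_closed[of t k] by simp
  then have "2 * sin (t/2) * \<bar>dk k t\<bar> = \<bar>sin ((real k + 1/2) * t)\<bar>"
    using s by (simp add: abs_mult)
  also have "\<dots> \<le> 1" by simp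
  finally have "\<bar>dk k t\<bar> \<le> 1 / (2 * sin (t/2))"
    using s by (simp add: field_simps)
  also have "\<dots> \<le> 1 / (2 * (t/6))"
    using s assms by (intro divide_left_mono mult_left_mono) auto
  finally show ?thesis by simp
qed

lemma kern_bound1:
  assumes "0 < t" "t \<le> pi" "\<And>k. k \<le> n \<Longrightarrow> 0 \<le> a k" "(\<Sum>k\<le>n. a k) = 1"
  shows "\<bar>kern a n t\<bar> \<le> 3 / t"
proof -
  have "\<bar>kern a n t\<bar> \<le> (\<Sum>k\<le>n. \<bar>a k * dk k t\<bar>)"
    unfolding kern_def by (rule sum_abs)
  also have "\<dots> \<le> (\<Sum>k\<le>n. a k * (3 / t))"
  proof (intro sum_mono)
    fix k assume "k \<in> {..n}"
    then have "0 \<le> a k" using assms(3) by auto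
    have "a k * \<bar>dk k t\<bar> \<le> a k * (3 / t)"
      by (rule mult_left_mono[OF dk_bound[OF assms(1,2)] \<open>0 \<le> a k\<close>])
    then show "\<bar>a k * dk k t\<bar> \<le> a k * (3 / t)" using \<open>0 \<le> a k\<close> by (simp add: abs_mult)
  qed
  also have "\<dots> = 3 / t" using assms(4) by (simp only: sum_distrib_right[symmetric])
  finally show ?thesis .
qed

lemma kern_bound2:
  assumes "0 < t" "t \<le> pi"
  shows "\<bar>kern a n t\<bar> \<le> 18 * ((\<Sum>k<n. \<bar>a k - a (Suc k)\<bar>) + \<bar>a n\<bar>) / t^2"
proof -
  note s = sin_half_t[OF assms]
  define S where "S = (\<lambda>k. \<Sum>j\<le>k. sin ((real j + 1/2) * t))"
  define V where "V = (\<Sum>k<n. \<bar>a k - a (Suc k)\<bar>)"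
  have Sb: "\<bar>S k\<bar> \<le> 1 / sin (t/2)" for k
  proof -
    have "\<bar>2 * sin (t/2) * S k\<bar> = \<bar>1 - cos ((real k + 1) * t)\<bar>"
      using sinsum_closed[of t k] by (simp add: S_def)
    then have "2 * sin (t/2) * \<bar>S k\<bar> = \<bar>1 - cos ((real k + 1) * t)\<bar>"
      using s by (simp add: abs_mult)
    also have "\<dots> \<le> 2" using abs_cos_le_one[of "(real k + 1) * t"] by linarith
    finally show ?thesis using s by (simp add: field_simps)
  qed
  have "2 * sin (t/2) * kern a n t = (\<Sum>k\<le>n. a k * sin ((real k + 1/2) * t))"
    unfolding kern_def sum_distrib_left using dk_closed by (simp add: algebra_simps)
  also have "\<dots> = (\<Sum>k<n. (a k - a (Suc k)) * S k) + a n * S n"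
    unfolding S_def by (rule abel_sum)
  finally have eq: "2 * sin (t/2) * kern a n t = (\<Sum>k<n. (a k - a (Suc k)) * S k) + a n * S n" .
  have "\<bar>(\<Sum>k<n. (a k - a (Suc k)) * S k) + a n * S n\<bar>
      \<le> (\<Sum>k<n. \<bar>a k - a (Suc k)\<bar> * (1 / sin (t/2))) + \<bar>a n\<bar> * (1 / sin (t/2))"
  proof -
    have "\<bar>(\<Sum>k<n. (a k - a (Suc k)) * S k)\<bar> \<le> (\<Sum>k<n. \<bar>(a k - a (Suc k)) * S k\<bar>)"
      by (rule sum_abs)
    also have "\<dots> \<le> (\<Sum>k<n. \<bar>a k - a (Suc k)\<bar> * (1 / sin (t/2)))"
      by (intro sum_mono) (simp only: abs_mult, rule mult_left_mono[OF Sb abs_ge_zero])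
    finally have "\<bar>(\<Sum>k<n. (a k - a (Suc k)) * S k)\<bar> \<le> (\<Sum>k<n. \<bar>a k - a (Suc k)\<bar> * (1 / sin (t/2)))" .
    moreover have "\<bar>a n * S n\<bar> \<le> \<bar>a n\<bar> * (1 / sin (t/2))"
      by (simp only: abs_mult, rule mult_left_mono[OF Sb abs_ge_zero])
    ultimately show ?thesis by (smt (verit))
  qed
  also have "\<dots> = (V + \<bar>a n\<bar>) / sin (t/2)"
    unfolding V_def sum_distrib_right[symmetric] by (simp add: add_divide_distrib)
  finally have "2 * sin (t/2) * \<bar>kern a n t\<bar> \<le> (V + \<bar>a n\<bar>) / sin (t/2)"
    using eq s by (simp add: abs_mult)
  then have "\<bar>kern a n t\<bar> \<le> (V + \<bar>a n\<bar>) / (2 * sin (t/2) * sin (t/2))"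
    using s by (simp add: field_simps)
  also have "\<dots> \<le> (V + \<bar>a n\<bar>) / (2 * (t/6) * (t/6))"
    using s assms by (intro divide_left_mono mult_mono) (auto simp: V_def intro!: sum_nonneg mult_pos_pos)
  also have "\<dots> = 18 * (V + \<bar>a n\<bar>) / t^2"
    by (simp add: field_simps power2_eq_square)
  finally show ?thesis unfolding V_def .
qed

lemma var_bound:
  fixes a :: "nat \<Rightarrow> real" and \<beta> C :: real
  assumes nn: "\<And>k. k \<le> n \<Longrightarrow> 0 \<le> a k" and beta: "0 \<le> \<beta>"
    and c: "(\<Sum>k<n. (real k + 1) powr \<beta> * \<bar>a k / (real k + 1) powr \<beta> - a (k + 1) / (real k + 2) powr \<beta>\<bar>) \<le> C * a n"
  shows "(\<Sum>k<n. \<bar>a k - a (Suc k)\<bar>) \<le> (2 * C + 1) * a n"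
proof -
  define d where "d = (\<lambda>k. (real k + 1) powr \<beta> * (a k / (real k + 1) powr \<beta> - a (k + 1) / (real k + 2) powr \<beta>))"
  have per: "\<bar>a k - a (Suc k)\<bar> \<le> 2 * \<bar>d k\<bar> - (a k - a (Suc k))" if "k < n" for k
  proof -
    have w0: "0 < (real k + 1) powr \<beta>" by simp
    have w1: "0 < (real k + 2) powr \<beta>" by simp
    have wm: "(real k + 1) powr \<beta> \<le> (real k + 2) powr \<beta>"
      using beta by (intro powr_mono2) auto
    have an: "0 \<le> a (Suc k)" using nn that by simp
    have "(real k + 1) powr \<beta> * a (Suc k) / (real k + 2) powr \<beta> \<le> a (Suc k)"
      using wm w1 an mult_left_mono[OF wm an] by (simp add: divide_le_eq mult.commute)
    then have "a k - a (Suc k) \<le> d k"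
      unfolding d_def using w0 by (simp add: right_diff_distrib)
    then show ?thesis by linarith
  qed
  have "(\<Sum>k<n. \<bar>a k - a (Suc k)\<bar>) \<le> (\<Sum>k<n. 2 * \<bar>d k\<bar> - (a k - a (Suc k)))"
    by (intro sum_mono per) auto
  also have "\<dots> = 2 * (\<Sum>k<n. \<bar>d k\<bar>) - (a 0 - a n)"
    using sum_lessThan_telescope'[of a n] by (simp only: sum_subtractf sum_distrib_left[symmetric])
  also have "(\<Sum>k<n. \<bar>d k\<bar>) = (\<Sum>k<n. (real k + 1) powr \<beta> * \<bar>a k / (real k + 1) powr \<beta> - a (k + 1) / (real k + 2) powr \<beta>\<bar>)"
    unfolding d_def by (simp add: abs_mult)
  finally show ?thesis using c nn[of 0] by (simp add: algebra_simps)
qed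



lemma periodic_nat:
  assumes "\<And>x. f (x + 2 * pi) = f x"
  shows "f (x + 2 * pi * real n) = f x"
proof (induction n arbitrary: x)
  case 0 then show ?case by simp
next
  case (Suc n)
  have "f (x + 2 * pi * real (Suc n)) = f ((x + 2 * pi * real n) + 2 * pi)"
    by (simp add: algebra_simps)
  also have "\<dots> = f x" using assms Suc by simp
  finally show ?case .
qed

lemma periodic_int:
  assumes "\<And>x. f (x + 2 * pi) = f x"
  shows "f (x + 2 * pi * real_of_int m) = f x"
proof (cases "m \<ge> 0")
  case True
  then obtain n where "m = int n" by (metis nonneg_int_cases)
  then show ?thesis using periodic_nat[of f, OF assms, of x n] by simp
next
  case False
  define n where "n = nat (- m)"
  have n: "m = - int n" using False unfolding n_def by simp
  have "f x = f ((x - 2 * pi * real n) + 2 * pi * real n)" by simp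
  also have "\<dots> = f (x - 2 * pi * real n)" by (rule periodic_nat[of f, OF assms])
  finally show ?thesis using n by simp
qed

lemma periodic_bounded:
  fixes f :: "real \<Rightarrow> real"
  assumes cont: "continuous_on UNIV f" and per: "\<And>x. f (x + 2 * pi) = f x"
  shows "\<exists>M. \<forall>x. \<bar>f x\<bar> \<le> M"
proof -
  have "compact (f ` {0..2*pi})"
    by (rule compact_continuous_image) (use cont continuous_on_subset in auto)
  then have "bounded (f ` {0..2*pi})" by (rule compact_imp_bounded)
  then obtain M where M0: "\<forall>y\<in>{0..2*pi}. \<bar>f y\<bar> \<le> M"
    unfolding bounded_iff by auto
  then have M: "\<And>y. y \<in> {0..2*pi} \<Longrightarrow> \<bar>f y\<bar> \<le> M" by blast
  have "\<bar>f x\<bar> \<le> M" for x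
  proof -
    define m where "m = \<lfloor>x / (2*pi)\<rfloor>"
    define y where "y = x - 2 * pi * real_of_int m"
    have "real_of_int m \<le> x / (2*pi)" "x / (2*pi) < real_of_int m + 1"
      unfolding m_def by (rule of_int_floor_le, rule real_of_int_floor_add_one_gt)
    then have "2 * pi * real_of_int m \<le> x" "x < 2 * pi * real_of_int m + 2 * pi"
      by (simp_all add: field_simps)
    then have "y \<in> {0..2*pi}" unfolding y_def by auto
    moreover have "f x = f y"
      using periodic_int[of f, OF per, of y m] unfolding y_def by simp
    ultimately show ?thesis using M by simp
  qed
  then show ?thesis by blast
qed

lemma lip_pointwise:
  fixes f :: "real \<Rightarrow> real"
  assumes M: "\<And>x. \<bar>f x\<bar> \<le> M"
    and L: "\<forall>\<delta>>0. modulus_of_continuity f \<delta> \<le> L * \<delta> powr \<alpha>"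
  shows "\<bar>f (x + u) - f x\<bar> \<le> L * \<bar>u\<bar> powr \<alpha>"
proof (cases "u = 0")
  case True then show ?thesis by simp
next
  case False
  have bd: "\<bar>f (y + h) - f y\<bar> \<le> 2 * M" for y h
    using M[of "y+h"] M[of y] by linarith
  have in1: "\<bar>f (x + u) - f x\<bar> \<le> (SUP y. \<bar>f (y + u) - f y\<bar>)"
    by (rule cSUP_upper) (auto intro!: bdd_aboveI[where M = "2*M"] simp: bd)
  have inner_le: "(SUP y. \<bar>f (y + h) - f y\<bar>) \<le> 2 * M" for h
    by (rule cSUP_least) (auto simp: bd)
  have in2: "(SUP y. \<bar>f (y + u) - f y\<bar>) \<le> modulus_of_continuity f \<bar>u\<bar>"
    unfolding modulus_of_continuity_def
    by (rule cSUP_upper[where f = "\<lambda>h. SUP y. \<bar>f (y + h) - f y\<bar>"])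
       (auto intro!: bdd_aboveI[where M = "2*M"] simp: inner_le)
  have "modulus_of_continuity f \<bar>u\<bar> \<le> L * \<bar>u\<bar> powr \<alpha>" using L False by auto
  with in1 in2 show ?thesis by linarith
qed

lemma dk_periodic: "dk k (u + 2 * pi) = dk k u"
proof -
  have "cos (real j * (u + 2 * pi)) = cos (real j * u)" for j
  proof -
    have "real j * (u + 2 * pi) = real j * u + 2 * real j * pi" by (simp add: algebra_simps)
    then show ?thesis by (simp add: cos_add)
  qed
  then show ?thesis unfolding dk_def by simp
qed

lemma dk_even: "dk k (-u) = dk k u"
  unfolding dk_def by simp

lemma kern_even: "kern a n (-u) = kern a n u"
  unfolding kern_def by (simp add: dk_even)

lemma cont_dk: "continuous_on S (dk k)"
  unfolding dk_def by (intro continuous_intros)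

lemma cont_kern: "continuous_on S (kern a n)"
  unfolding kern_def by (auto intro!: continuous_intros cont_dk)

lemma dk_integral: "(dk k has_integral pi) {-pi..pi}"
proof -
  have c: "((\<lambda>u. cos (real j * u)) has_integral 0) {-pi..pi}" if "j \<in> {1..k}" for j
    using has_integral_cos_nx[of "int j"] that by simp
  have "((\<lambda>u. 1/2 + (\<Sum>j=1..k. cos (real j * u))) has_integral (pi + (\<Sum>j=1..k. 0))) {-pi..pi}"
  proof (rule has_integral_add)
    show "((\<lambda>u. 1/2::real) has_integral pi) {-pi..pi}"
      using has_integral_const_real[of "1/2::real" "-pi" pi] by simp
    show "((\<lambda>u. \<Sum>j = 1..k. cos (real j * u)) has_integral (\<Sum>j = 1..k. 0)) {-pi..pi}"
      by (rule has_integral_sum) (use c in auto)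
  qed
  then show ?thesis unfolding dk_def[abs_def] by simp
qed



lemma coef_integral_cos:
  assumes cont: "continuous_on UNIV f"
  shows "((\<lambda>t. f t * cos (real j * t)) has_integral (pi * fourier_a f j)) {-pi..pi}"
proof -
  have "(\<lambda>t. f t * cos (real j * t)) integrable_on {-pi..pi}"
    by (rule integrable_continuous_real) (use cont continuous_on_subset in \<open>auto intro!: continuous_intros\<close>)
  then show ?thesis unfolding fourier_a_def by (simp add: has_integral_integral)
qed

lemma coef_integral_sin:
  assumes cont: "continuous_on UNIV f"
  shows "((\<lambda>t. f t * sin (real j * t)) has_integral (pi * fourier_b f j)) {-pi..pi}"
proof -
  have "(\<lambda>t. f t * sin (real j * t)) integrable_on {-pi..pi}"
    by (rule integrable_continuous_real) (use cont continuous_on_subset in \<open>auto intro!: continuous_intros\<close>)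
  then show ?thesis unfolding fourier_b_def by (simp add: has_integral_integral)
qed

lemma fourier_conv0:
  assumes cont: "continuous_on UNIV f"
  shows "((\<lambda>t. f t * dk k (t - x)) has_integral (pi * fourier_partial_sum f k x)) {-pi..pi}"
proof -
  have pw: "f t * dk k (t - x) = (1/2) * (f t * cos (real 0 * t)) +
      (\<Sum>j=1..k. cos (real j * x) * (f t * cos (real j * t)) + sin (real j * x) * (f t * sin (real j * t)))" for t
  proof -
    have "cos (real j * (t - x)) = cos (real j * t) * cos (real j * x) + sin (real j * t) * sin (real j * x)" for j
      by (simp add: right_diff_distrib cos_diff)
    then show ?thesis unfolding dk_def by (simp add: distrib_left sum_distrib_left algebra_simps)
  qed
  have "((\<lambda>t. (1/2) * (f t * cos (real 0 * t)) +
      (\<Sum>j=1..k. cos (real j * x) * (f t * cos (real j * t)) + sin (real j * x) * (f t * sin (real j * t))))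
      has_integral ((1/2) * (pi * fourier_a f 0) +
      (\<Sum>j=1..k. cos (real j * x) * (pi * fourier_a f j) + sin (real j * x) * (pi * fourier_b f j)))) {-pi..pi}"
    by (intro has_integral_add has_integral_mult_right has_integral_sum finite_atLeastAtMost
        coef_integral_cos[OF cont] coef_integral_sin[OF cont])
  moreover have "(1/2) * (pi * fourier_a f 0) +
      (\<Sum>j=1..k. cos (real j * x) * (pi * fourier_a f j) + sin (real j * x) * (pi * fourier_b f j))
      = pi * fourier_partial_sum f k x"
    unfolding fourier_partial_sum_def by (simp add: distrib_left sum_distrib_left algebra_simps)
  ultimately show ?thesis unfolding pw by simp
qed

lemma fourier_conv:
  assumes cont: "continuous_on UNIV f" and per: "\<And>x. f (x + 2 * pi) = f x"
  shows "((\<lambda>u. f (x + u) * dk k u) has_integral (pi * fourier_partial_sum f k x)) {-pi..pi}"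
proof -
  define h where "h = (\<lambda>u. f (x + u) * dk k u)"
  have ch: "continuous_on UNIV h"
    unfolding h_def
    by (intro continuous_intros cont_dk continuous_on_compose2[OF cont]) auto
  have ph: "h (u + 2 * pi) = h u" for u
    using per[of "x + u"] dk_periodic[of k u] unfolding h_def by (simp add: add.assoc)
  have "(((\<lambda>t. f t * dk k (t - x)) \<circ> (+) x) has_integral (pi * fourier_partial_sum f k x)) {-pi-x..pi-x}"
    using fourier_conv0[OF cont, of k x] by (simp add: has_integral_shift_Icc_real)
  moreover have "((\<lambda>t. f t * dk k (t - x)) \<circ> (+) x) = h"
    unfolding h_def by (auto simp: comp_def)
  ultimately have hi: "(h has_integral (pi * fourier_partial_sum f k x)) {-pi-x..-pi-x+2*pi}"
    by (simp add: algebra_simps)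
  have "integral {-pi-x..-pi-x+2*pi} h = integral {-pi..pi} h"
    by (rule periodic_integral_shift[OF ch ph])
  moreover have "h integrable_on {-pi..pi}"
    by (rule integrable_continuous_real) (use ch continuous_on_subset in blast)
  ultimately have "(h has_integral (pi * fourier_partial_sum f k x)) {-pi..pi}"
    using hi integral_unique[OF hi] by (metis has_integral_integral)
  then show ?thesis unfolding h_def .
qed

lemma mean_repr:
  assumes cont: "continuous_on UNIV f" and per: "\<And>x. f (x + 2 * pi) = f x"
    and sa: "(\<Sum>k\<le>n. a k) = 1"
  shows "((\<lambda>u. (f (x + u) - f x) * kern a n u) has_integral
           (pi * ((\<Sum>k\<le>n. a k * fourier_partial_sum f k x) - f x))) {-pi..pi}"
proof -
  have "((\<lambda>u. (\<Sum>k\<le>n. a k * (f (x + u) * dk k u)) - (\<Sum>k\<le>n. a k * (f x * dk k u))) has_integral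
      ((\<Sum>k\<le>n. a k * (pi * fourier_partial_sum f k x)) - (\<Sum>k\<le>n. a k * (f x * pi)))) {-pi..pi}"
    by (intro has_integral_diff has_integral_sum finite_atMost has_integral_mult_right
        fourier_conv[OF cont per] dk_integral)
  moreover have "(\<lambda>u. (\<Sum>k\<le>n. a k * (f (x + u) * dk k u)) - (\<Sum>k\<le>n. a k * (f x * dk k u)))
      = (\<lambda>u. (f (x + u) - f x) * kern a n u)"
    unfolding kern_def by (auto simp: sum_distrib_left sum_subtractf[symmetric] algebra_simps intro!: sum.cong)
  moreover have "(\<Sum>k\<le>n. a k * (pi * fourier_partial_sum f k x)) - (\<Sum>k\<le>n. a k * (f x * pi))
      = pi * ((\<Sum>k\<le>n. a k * fourier_partial_sum f k x) - f x)"
  proof -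
    have "(\<Sum>k\<le>n. a k * (f x * pi)) = (\<Sum>k\<le>n. a k) * (f x * pi)"
      by (simp add: sum_distrib_right)
    then show ?thesis using sa by (simp add: sum_distrib_left algebra_simps)
  qed
  ultimately show ?thesis by simp
qed



lemma est_half:
  fixes h :: "real \<Rightarrow> real"
  assumes ch: "continuous_on {0..pi} h" and eps: "0 < \<epsilon>" "\<epsilon> \<le> pi" and al: "0 < \<alpha>"
    and b1: "\<And>u. u \<in> {0..\<epsilon>} \<Longrightarrow> \<bar>h u\<bar> \<le> A * u powr (\<alpha> - 1)"
    and b2: "\<And>u. u \<in> {\<epsilon>..pi} \<Longrightarrow> \<bar>h u\<bar> \<le> B * u powr (\<alpha> - 2)"
  shows "\<bar>integral {0..pi} h\<bar> \<le> A * (\<epsilon> powr \<alpha> / \<alpha>) + B * integral {\<epsilon>..pi} (\<lambda>u. u powr (\<alpha> - 2))"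
proof -
  have hi: "h integrable_on {0..pi}"
    by (rule integrable_continuous_real) (rule ch)
  have hi1: "h integrable_on {0..\<epsilon>}"
    by (rule integrable_continuous_real, rule continuous_on_subset[OF ch]) (use eps in auto)
  have hi2: "h integrable_on {\<epsilon>..pi}"
    by (rule integrable_continuous_real, rule continuous_on_subset[OF ch]) (use eps in auto)
  have split: "integral {0..\<epsilon>} h + integral {\<epsilon>..pi} h = integral {0..pi} h"
    by (rule Henstock_Kurzweil_Integration.integral_combine) (use eps hi in auto)
  have g1: "((\<lambda>u. A * u powr (\<alpha> - 1)) has_integral (A * (\<epsilon> powr \<alpha> / \<alpha>))) {0..\<epsilon>}"
    using has_integral_mult_right[OF has_integral_powr_from_0[of "\<alpha> - 1" \<epsilon>], of A] al eps by simp
  have "\<bar>integral {0..\<epsilon>} h\<bar> \<le> integral {0..\<epsilon>} (\<lambda>u. A * u powr (\<alpha> - 1))"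
    using integral_norm_bound_integral[OF hi1 has_integral_integrable[OF g1]] b1 by simp
  also have "\<dots> = A * (\<epsilon> powr \<alpha> / \<alpha>)" using g1 by (rule integral_unique)
  finally have I1: "\<bar>integral {0..\<epsilon>} h\<bar> \<le> A * (\<epsilon> powr \<alpha> / \<alpha>)" .
  have pc: "continuous_on {\<epsilon>..pi} (\<lambda>u. u powr (\<alpha> - 2))"
    by (intro continuous_intros) (use eps in auto)
  have pint: "(\<lambda>u. u powr (\<alpha> - 2)) integrable_on {\<epsilon>..pi}"
    by (rule integrable_continuous_real) (rule pc)
  have g2: "((\<lambda>u. B * u powr (\<alpha> - 2)) has_integral (B * integral {\<epsilon>..pi} (\<lambda>u. u powr (\<alpha> - 2)))) {\<epsilon>..pi}"
    by (rule has_integral_mult_right) (use pint in \<open>simp add: has_integral_integral\<close>)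
  have "\<bar>integral {\<epsilon>..pi} h\<bar> \<le> integral {\<epsilon>..pi} (\<lambda>u. B * u powr (\<alpha> - 2))"
    using integral_norm_bound_integral[OF hi2 has_integral_integrable[OF g2]] b2 by simp
  also have "\<dots> = B * integral {\<epsilon>..pi} (\<lambda>u. u powr (\<alpha> - 2))" using g2 by (rule integral_unique)
  finally have I2: "\<bar>integral {\<epsilon>..pi} h\<bar> \<le> B * integral {\<epsilon>..pi} (\<lambda>u. u powr (\<alpha> - 2))" .
  show ?thesis using I1 I2 split[symmetric] by linarith
qed

lemma int_powr_lt1:
  assumes "0 < \<alpha>" "\<alpha> < 1" "0 < \<epsilon>" "\<epsilon> \<le> pi"
  shows "integral {\<epsilon>..pi} (\<lambda>u. u powr (\<alpha> - 2)) \<le> \<epsilon> powr (\<alpha> - 1) / (1 - \<alpha>)"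
proof -
  have "((\<lambda>u. u powr (\<alpha> - 2)) has_integral
      (pi powr (\<alpha> - 1) / (\<alpha> - 1) - \<epsilon> powr (\<alpha> - 1) / (\<alpha> - 1))) {\<epsilon>..pi}"
  proof (rule fundamental_theorem_of_calculus)
    show "\<epsilon> \<le> pi" by fact
    fix u assume u: "u \<in> {\<epsilon>..pi}"
    then have "0 < u" using assms by auto
    have "((\<lambda>u. u powr (\<alpha> - 1) / (\<alpha> - 1)) has_real_derivative ((\<alpha> - 1) * u powr (\<alpha> - 1 - 1)) / (\<alpha> - 1)) (at u)"
      by (intro DERIV_cdivide has_real_derivative_powr \<open>0 < u\<close>)
    moreover have "(\<alpha> - 1) * u powr (\<alpha> - 1 - 1) / (\<alpha> - 1) = u powr (\<alpha> - 2)"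
    proof -
      have e2: "\<alpha> - 1 - 1 = \<alpha> - 2" by simp
      have ne: "\<alpha> - 1 \<noteq> 0" using assms by simp
      show ?thesis unfolding e2 using ne by simp
    qed
    ultimately have "((\<lambda>u. u powr (\<alpha> - 1) / (\<alpha> - 1)) has_real_derivative u powr (\<alpha> - 2)) (at u)"
      by simp
    then show "((\<lambda>u. u powr (\<alpha> - 1) / (\<alpha> - 1)) has_vector_derivative u powr (\<alpha> - 2)) (at u within {\<epsilon>..pi})"
      by (simp add: has_real_derivative_iff_has_vector_derivative has_vector_derivative_at_within)
  qed
  moreover have "X / (\<alpha> - 1) - Y / (\<alpha> - 1) = (Y - X) / (1 - \<alpha>)" for X Y :: real
  proof -
    have "\<alpha> - 1 = - (1 - \<alpha>)" by simp
    then show ?thesis by (simp only: divide_minus_right diff_divide_distrib)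
  qed
  ultimately have "integral {\<epsilon>..pi} (\<lambda>u. u powr (\<alpha> - 2)) = (\<epsilon> powr (\<alpha> - 1) - pi powr (\<alpha> - 1)) / (1 - \<alpha>)"
    by (metis integral_unique)
  also have "\<dots> \<le> \<epsilon> powr (\<alpha> - 1) / (1 - \<alpha>)"
    using assms by (intro divide_right_mono) auto
  finally show ?thesis .
qed

lemma int_powr_eq1:
  assumes "0 < \<epsilon>" "\<epsilon> \<le> pi"
  shows "integral {\<epsilon>..pi} (\<lambda>u. u powr (1 - 2)) = ln (pi / \<epsilon>)"
proof -
  have "((\<lambda>u. u powr (1 - 2)) has_integral (ln pi - ln \<epsilon>)) {\<epsilon>..pi}"
  proof (rule fundamental_theorem_of_calculus)
    show "\<epsilon> \<le> pi" by fact
    fix u assume u: "u \<in> {\<epsilon>..pi}"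
    then have "0 < u" using assms by auto
    have "(ln has_real_derivative 1 / u) (at u)"
      using \<open>0 < u\<close> by (auto intro!: derivative_eq_intros)
    then have "(ln has_real_derivative u powr (1 - 2)) (at u)"
      using \<open>0 < u\<close> by (simp add: powr_neg_one)
    then show "(ln has_vector_derivative u powr (1 - 2)) (at u within {\<epsilon>..pi})"
      by (simp add: has_real_derivative_iff_has_vector_derivative has_vector_derivative_at_within)
  qed
  then show ?thesis using assms by (simp add: integral_unique ln_div)
qed



lemma powr_m1: "0 < (u::real) \<Longrightarrow> u powr (\<alpha> - 1) = u powr \<alpha> / u"
  by (simp add: powr_diff)

lemma powr_m2: "0 < (u::real) \<Longrightarrow> u powr (\<alpha> - 2) = u powr \<alpha> / u^2"
  by (simp add: powr_diff)

lemma chain4: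
  fixes r A X Y Z W :: real
  assumes "r \<le> 2 * (A + X)" "X = Y" "Y \<le> Z" "2 * (A + Z) = W"
  shows "r \<le> W"
proof -
  have "2 * (A + X) \<le> 2 * (A + Z)" using assms(2,3) by simp
  then show ?thesis using assms(1,4) by simp
qed

lemma chain5:
  fixes r A A' X W :: real
  assumes "r \<le> 2 * (A + X)" "A \<le> A'" "2 * (A' + X) = W"
  shows "r \<le> W"
proof -
  have "2 * (A + X) \<le> 2 * (A' + X)" using assms(2) by simp
  then show ?thesis using assms(1,3) by simp
qed

theorem corollary4p3:
  fixes f :: "real \<Rightarrow> real" and p :: "nat \<Rightarrow> real" and \<alpha> \<beta> :: real
  assumes cont: "continuous_on UNIV f"
    and periodic: "\<And>x. f (x + 2 * pi) = f x"
    and alpha: "0 < \<alpha>" "\<alpha> \<le> 1"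
    and lip: "\<exists>C>0. \<forall>\<delta>>0. modulus_of_continuity f \<delta> \<le> C * \<delta> powr \<alpha>"
    and p_nonneg: "\<And>k. p k \<ge> 0"
    and P_nz: "\<And>n. Psum p n \<noteq> 0"
    and beta: "\<beta> \<ge> 0"
    and cond: "\<exists>C>0. \<forall>n m. m \<le> n \<longrightarrow>
       (\<Sum>k<m. (real k + 1) powr \<beta> *
          \<bar>amat p n k / (real k + 1) powr \<beta> - amat p n (k + 1) / (real k + 2) powr \<beta>\<bar>)
       \<le> C * amat p n m"
  shows "(\<alpha> < 1 \<longrightarrow> (\<exists>C>0. \<forall>n. sup_norm (\<lambda>x. R_mean p f n x - f x) \<le> C * (p n / Psum p n) powr \<alpha>))
       \<and> (\<alpha> = 1 \<longrightarrow> (\<exists>C>0. \<forall>n. sup_norm (\<lambda>x. R_mean p f n x - f x)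
                                  \<le> C * ((p n / Psum p n) * ln (pi * Psum p n / p n))))"
proof -
  from lip obtain L where L: "L > 0" "\<forall>\<delta>>0. modulus_of_continuity f \<delta> \<le> L * \<delta> powr \<alpha>" by blast
  from cond obtain C0 where C0: "C0 > 0" "\<forall>n m. m \<le> n \<longrightarrow>
       (\<Sum>k<m. (real k + 1) powr \<beta> *
          \<bar>amat p n k / (real k + 1) powr \<beta> - amat p n (k + 1) / (real k + 2) powr \<beta>\<bar>)
       \<le> C0 * amat p n m" by blast
  obtain M where M: "\<And>x. \<bar>f x\<bar> \<le> M" using periodic_bounded[OF cont periodic] by blast
  have lipf: "\<bar>f (x + u) - f x\<bar> \<le> L * \<bar>u\<bar> powr \<alpha>" for x u
    by (rule lip_pointwise[OF M L(2)])
  define eps where "eps n = p n / Psum p n" for n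
  define I where "I n = integral {eps n..pi} (\<lambda>u. u powr (\<alpha> - 2))" for n
  have Ppos: "0 < Psum p n" for n
  proof -
    have "0 \<le> Psum p n" unfolding Psum_def by (rule sum_nonneg) (use p_nonneg in auto)
    then show ?thesis using P_nz[of n] by linarith
  qed
  have key: "0 < eps n \<and> eps n \<le> 1 \<and> (\<forall>x. \<bar>R_mean p f n x - f x\<bar>
      \<le> 2 * (3 * L * (eps n powr \<alpha> / \<alpha>) + 18 * L * (2 * C0 + 2) * eps n * I n))" for n
  proof -
    define a where "a = amat p n"
    have a_nn: "0 \<le> a k" for k using p_nonneg[of k] Ppos[of n] unfolding a_def amat_def by auto
    have sa: "(\<Sum>k\<le>n. a k) = 1"
    proof -
      have "(\<Sum>k\<le>n. a k) = (\<Sum>k\<le>n. p k / Psum p n)" by (simp add: a_def amat_def)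
      also have "\<dots> = (\<Sum>k\<le>n. p k) / Psum p n" by (simp add: sum_divide_distrib)
      also have "\<dots> = 1" using Ppos[of n] unfolding Psum_def by simp
      finally show ?thesis .
    qed
    have an: "a n = eps n" by (simp add: a_def amat_def eps_def)
    have cn: "(\<Sum>k<n. (real k + 1) powr \<beta> * \<bar>a k / (real k + 1) powr \<beta> - a (k + 1) / (real k + 2) powr \<beta>\<bar>) \<le> C0 * a n"
      using C0(2) unfolding a_def by blast
    have V: "(\<Sum>k<n. \<bar>a k - a (Suc k)\<bar>) \<le> (2 * C0 + 1) * a n"
      by (rule var_bound[OF _ beta cn]) (use a_nn in auto)
    have epos: "0 < eps n"
    proof -
      have "(\<Sum>k\<le>n. a k * 1) = (\<Sum>k<n. (a k - a (Suc k)) * (\<Sum>j\<le>k. 1)) + a n * (\<Sum>j\<le>n. 1)"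
        by (rule abel_sum)
      then have "1 = (\<Sum>k<n. (a k - a (Suc k)) * real (Suc k)) + a n * real (Suc n)" using sa by simp
      also have "\<dots> \<le> (\<Sum>k<n. \<bar>a k - a (Suc k)\<bar> * real (Suc n)) + a n * real (Suc n)"
        by (intro add_right_mono sum_mono mult_mono) auto
      also have "\<dots> = ((\<Sum>k<n. \<bar>a k - a (Suc k)\<bar>) + a n) * real (Suc n)"
        by (simp only: sum_distrib_right distrib_right)
      also have "\<dots> \<le> ((2 * C0 + 1) * a n + a n) * real (Suc n)"
        using V by (intro mult_right_mono) auto
      finally have "1 \<le> ((2 * C0 + 1) * a n + a n) * real (Suc n)" .
      then have "a n \<noteq> 0" by auto
      then show ?thesis using an a_nn[of n] by simp
    qed
    have ele1: "eps n \<le> 1"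
    proof -
      have "p n \<le> Psum p n" unfolding Psum_def by (rule member_le_sum) (use p_nonneg in auto)
      then show ?thesis unfolding eps_def using Ppos[of n] by (simp add: divide_le_eq)
    qed
    have epi: "eps n \<le> pi" using ele1 pi_ge_two by linarith
    have Rm: "R_mean p f n x = (\<Sum>k\<le>n. a k * fourier_partial_sum f k x)" for x
      unfolding R_mean_def a_def amat_def by (auto simp: sum_distrib_left intro!: sum.cong)
    have kb1: "L * u powr \<alpha> * \<bar>kern a n u\<bar> \<le> 3 * L * u powr (\<alpha> - 1)" if "0 \<le> u" "u \<le> pi" for u
    proof (cases "u = 0")
      case True then show ?thesis by simp
    next
      case False
      then have u: "0 < u" using that by simp
      have "L * u powr \<alpha> * \<bar>kern a n u\<bar> \<le> L * u powr \<alpha> * (3 / u)"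
        using kern_bound1[OF u that(2) _ sa] a_nn L(1) by (intro mult_left_mono) auto
      also have "\<dots> = 3 * L * u powr (\<alpha> - 1)" using u by (simp add: powr_m1)
      finally show ?thesis .
    qed
    have kb2: "L * u powr \<alpha> * \<bar>kern a n u\<bar> \<le> 18 * L * (2 * C0 + 2) * eps n * u powr (\<alpha> - 2)"
      if "eps n \<le> u" "u \<le> pi" for u
    proof -
      have u: "0 < u" using that epos by linarith
      have "\<bar>kern a n u\<bar> \<le> 18 * ((\<Sum>k<n. \<bar>a k - a (Suc k)\<bar>) + \<bar>a n\<bar>) / u^2"
        by (rule kern_bound2[OF u that(2)])
      also have "\<dots> \<le> 18 * ((2 * C0 + 2) * eps n) / u^2"
        using V an a_nn[of n] u by (intro divide_right_mono mult_left_mono) (auto simp: algebra_simps)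
      finally have "L * u powr \<alpha> * \<bar>kern a n u\<bar> \<le> L * u powr \<alpha> * (18 * ((2 * C0 + 2) * eps n) / u^2)"
        using L(1) by (intro mult_left_mono) auto
      also have "\<dots> = 18 * L * (2 * C0 + 2) * eps n * u powr (\<alpha> - 2)"
        using u by (simp add: powr_m2)
      finally show ?thesis .
    qed
    have pt: "\<bar>R_mean p f n x - f x\<bar> \<le> 2 * (3 * L * (eps n powr \<alpha> / \<alpha>) + 18 * L * (2 * C0 + 2) * eps n * I n)" for x
    proof -
      define H where "H = (\<lambda>u. (f (x + u) - f x) * kern a n u)"
      have hi: "(H has_integral (pi * (R_mean p f n x - f x))) {-pi..pi}"
        unfolding H_def Rm by (rule mean_repr[OF cont periodic sa])
      have cH: "continuous_on UNIV H"
        unfolding H_def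
        by (intro continuous_intros cont_kern continuous_on_compose2[OF cont]) auto
      have cH2: "continuous_on UNIV (\<lambda>u. H (- u))"
        by (intro continuous_on_compose2[OF cH] continuous_intros) auto
      have split: "integral {-pi..0} H + integral {0..pi} H = integral {-pi..pi} H"
        by (rule Henstock_Kurzweil_Integration.integral_combine)
           (auto intro!: integrable_continuous_real continuous_on_subset[OF cH])
      have refl: "integral {-pi..0} H = integral {0..pi} (\<lambda>u. H (- u))"
        using Henstock_Kurzweil_Integration.integral_reflect_real[of 0 "-pi" H] by simp
      have bnd: "\<bar>integral {0..pi} g\<bar> \<le> 3 * L * (eps n powr \<alpha> / \<alpha>) + 18 * L * (2 * C0 + 2) * eps n * I n"
        if cg: "continuous_on UNIV g" and gb: "\<And>u. 0 \<le> u \<Longrightarrow> \<bar>g u\<bar> \<le> L * u powr \<alpha> * \<bar>kern a n u\<bar>" for g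
      proof -
        have "\<bar>integral {0..pi} g\<bar> \<le> (3 * L) * (eps n powr \<alpha> / \<alpha>) + (18 * L * (2 * C0 + 2) * eps n) * integral {eps n..pi} (\<lambda>u. u powr (\<alpha> - 2))"
        proof (rule est_half[OF _ epos epi alpha(1)])
          show "continuous_on {0..pi} g" using cg continuous_on_subset by blast
          show "\<bar>g u\<bar> \<le> 3 * L * u powr (\<alpha> - 1)" if "u \<in> {0..eps n}" for u
            using gb[of u] kb1[of u] that epi by auto
          show "\<bar>g u\<bar> \<le> 18 * L * (2 * C0 + 2) * eps n * u powr (\<alpha> - 2)" if "u \<in> {eps n..pi}" for u
            using gb[of u] kb2[of u] that epos by auto
        qed
        then show ?thesis unfolding I_def by simp
      qed
      have b1: "\<bar>integral {0..pi} H\<bar> \<le> 3 * L * (eps n powr \<alpha> / \<alpha>) + 18 * L * (2 * C0 + 2) * eps n * I n"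
      proof (rule bnd[OF cH])
        fix u :: real assume "0 \<le> u"
        have "\<bar>H u\<bar> = \<bar>f (x + u) - f x\<bar> * \<bar>kern a n u\<bar>" by (simp add: H_def abs_mult)
        also have "\<dots> \<le> L * u powr \<alpha> * \<bar>kern a n u\<bar>"
          using lipf[of x u] \<open>0 \<le> u\<close> by (intro mult_right_mono) auto
        finally show "\<bar>H u\<bar> \<le> L * u powr \<alpha> * \<bar>kern a n u\<bar>" .
      qed
      have b2: "\<bar>integral {0..pi} (\<lambda>u. H (- u))\<bar> \<le> 3 * L * (eps n powr \<alpha> / \<alpha>) + 18 * L * (2 * C0 + 2) * eps n * I n"
      proof (rule bnd[OF cH2])
        fix u :: real assume "0 \<le> u"
        have "\<bar>H (- u)\<bar> = \<bar>f (x + - u) - f x\<bar> * \<bar>kern a n u\<bar>" by (simp add: H_def abs_mult kern_even)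
        also have "\<dots> \<le> L * u powr \<alpha> * \<bar>kern a n u\<bar>"
          using lipf[of x "- u"] \<open>0 \<le> u\<close> by (intro mult_right_mono) auto
        finally show "\<bar>H (- u)\<bar> \<le> L * u powr \<alpha> * \<bar>kern a n u\<bar>" .
      qed
      have "pi * (R_mean p f n x - f x) = integral {-pi..pi} H" using hi by (simp add: integral_unique)
      then have "pi * \<bar>R_mean p f n x - f x\<bar> \<le> 2 * (3 * L * (eps n powr \<alpha> / \<alpha>) + 18 * L * (2 * C0 + 2) * eps n * I n)"
        using b1 b2 split refl by (simp add: abs_mult)
      moreover have "\<bar>R_mean p f n x - f x\<bar> \<le> pi * \<bar>R_mean p f n x - f x\<bar>"
        using mult_right_mono[of 1 pi "\<bar>R_mean p f n x - f x\<bar>"] pi_ge_two by simp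
      ultimately show ?thesis by linarith
    qed
    show ?thesis using epos ele1 pt by blast
  qed
  have sn: "sup_norm (\<lambda>x. R_mean p f n x - f x) \<le> B"
    if "\<And>x. \<bar>R_mean p f n x - f x\<bar> \<le> B" for n B
    unfolding sup_norm_def by (rule cSUP_least) (use that in auto)
  show ?thesis
  proof (intro conjI impI)
    assume a1: "\<alpha> < 1"
    define K1 where "K1 = 2 * (3 * L / \<alpha> + 18 * L * (2 * C0 + 2) / (1 - \<alpha>))"
    have K1pos: "K1 > 0" using L(1) alpha a1 C0(1) unfolding K1_def
      by (intro mult_pos_pos add_pos_pos divide_pos_pos) auto
    show "\<exists>C>0. \<forall>n. sup_norm (\<lambda>x. R_mean p f n x - f x) \<le> C * (p n / Psum p n) powr \<alpha>"
    proof (intro exI[of _ K1] conjI allI K1pos)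
      fix n
      have e0: "0 < eps n" and e1: "eps n \<le> 1"
        and bx: "\<And>x. \<bar>R_mean p f n x - f x\<bar> \<le> 2 * (3 * L * (eps n powr \<alpha> / \<alpha>) + 18 * L * (2 * C0 + 2) * eps n * I n)"
        using key[of n] by auto
      have epi: "eps n \<le> pi" using e1 pi_ge_two by linarith
      have Ile: "I n \<le> eps n powr (\<alpha> - 1) / (1 - \<alpha>)"
        using int_powr_lt1[OF alpha(1) a1 e0 epi] unfolding I_def .
      have "eps n * I n \<le> eps n * (eps n powr (\<alpha> - 1) / (1 - \<alpha>))"
        using Ile e0 by (intro mult_left_mono) auto
      also have "\<dots> = eps n powr \<alpha> / (1 - \<alpha>)"
        using powr_mult_base[of "eps n" "\<alpha> - 1"] e0 by simp
      finally have "eps n * I n \<le> eps n powr \<alpha> / (1 - \<alpha>)" .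
      then have f1: "18 * L * (2 * C0 + 2) * (eps n * I n) \<le> 18 * L * (2 * C0 + 2) * (eps n powr \<alpha> / (1 - \<alpha>))"
        using L(1) C0(1) by (intro mult_left_mono) auto
      have f2: "18 * L * (2 * C0 + 2) * eps n * I n = 18 * L * (2 * C0 + 2) * (eps n * I n)"
        by (simp only: mult.assoc)
      have f3: "2 * (3 * L * (eps n powr \<alpha> / \<alpha>) + 18 * L * (2 * C0 + 2) * (eps n powr \<alpha> / (1 - \<alpha>)))
          = K1 * eps n powr \<alpha>"
        unfolding K1_def by (simp add: algebra_simps add_divide_distrib)
      have "\<bar>R_mean p f n x - f x\<bar> \<le> K1 * eps n powr \<alpha>" for x
        by (rule chain4[OF bx[of x] f2 f1 f3])
      then show "sup_norm (\<lambda>x. R_mean p f n x - f x) \<le> K1 * (p n / Psum p n) powr \<alpha>"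
        using sn unfolding eps_def by blast
    qed
  next
    assume a1: "\<alpha> = 1"
    have lnpi: "0 < ln pi" using pi_ge_two by simp
    define K2 where "K2 = 2 * (3 * L / ln pi + 18 * L * (2 * C0 + 2))"
    have K2pos: "K2 > 0" using L(1) C0(1) lnpi unfolding K2_def
      by (intro mult_pos_pos add_pos_pos divide_pos_pos) auto
    show "\<exists>C>0. \<forall>n. sup_norm (\<lambda>x. R_mean p f n x - f x) \<le> C * ((p n / Psum p n) * ln (pi * Psum p n / p n))"
    proof (intro exI[of _ K2] conjI allI K2pos)
      fix n
      have e0: "0 < eps n" and e1: "eps n \<le> 1"
        and bx: "\<And>x. \<bar>R_mean p f n x - f x\<bar> \<le> 2 * (3 * L * (eps n powr \<alpha> / \<alpha>) + 18 * L * (2 * C0 + 2) * eps n * I n)"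
        using key[of n] by auto
      have epi: "eps n \<le> pi" using e1 pi_ge_two by linarith
      have In: "I n = ln (pi / eps n)"
        unfolding I_def a1 by (rule int_powr_eq1[OF e0 epi])
      have ep1: "eps n powr \<alpha> / \<alpha> = eps n" using a1 e0 by simp
      have lnge: "ln pi \<le> ln (pi / eps n)"
        using e0 e1 by (subst ln_le_cancel_iff) (auto simp: le_divide_eq)
      have "eps n = eps n * ln pi / ln pi" using lnpi by simp
      also have "\<dots> \<le> eps n * ln (pi / eps n) / ln pi"
        using lnge e0 lnpi by (intro divide_right_mono mult_left_mono) auto
      finally have "3 * L * eps n \<le> 3 * L * (eps n * ln (pi / eps n) / ln pi)"
        using L(1) by (intro mult_left_mono) auto
      then have g1: "3 * L * (eps n powr \<alpha> / \<alpha>) \<le> 3 * L * (eps n * ln (pi / eps n) / ln pi)"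
        unfolding ep1 .
      have g2: "2 * (3 * L * (eps n * ln (pi / eps n) / ln pi) + 18 * L * (2 * C0 + 2) * eps n * I n)
          = K2 * (eps n * ln (pi / eps n))"
        unfolding K2_def In by (simp add: algebra_simps)
      have "\<bar>R_mean p f n x - f x\<bar> \<le> K2 * (eps n * ln (pi / eps n))" for x
        by (rule chain5[OF bx[of x] g1 g2])
      moreover have "pi / eps n = pi * Psum p n / p n" unfolding eps_def by simp
      ultimately show "sup_norm (\<lambda>x. R_mean p f n x - f x) \<le> K2 * ((p n / Psum p n) * ln (pi * Psum p n / p n))"
        using sn unfolding eps_def by metis
    qed
  qed
qed

end
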